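(* Let $\mathcal C$ be a category, $I:\mathcal B\to\mathcal C$ the inclusion of a full subcategory with a left adjoint $S:\mathcal C\to\mathcal B$ (unit $\alpha:1\to IS$, counit $SI\cong1$), and $J:\mathcal D\to\mathcal C$ the inclusion of a full subcategory with a right adjoint $T:\mathcal C\to\mathcal D$ (unit $1\cong TJ$, counit $\epsilon:JT\to1$), and suppose $IS\epsilon:ISJT\to IS$ and $JT\alpha:JT\to JTIS$ are isomorphisms. Then $TI:\mathcal B\to\mathcal D$ is left adjoint to $SJ:\mathcal D\to\mathcal B$, and each of $TI$ and $SJ$ is an equivalence of categories. *)

theory Defs
  imports Main
begin

text \<open>Elementary category theory, developed from scratch (no library available).
  Composition convention: cat_comp C g f is "g after f" (defined when cod f = dom g).\<close>

record ('o, 'a) cat =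
  cat_obj   :: "'o set"
  cat_arr   :: "'a set"
  cat_dom   :: "'a \<Rightarrow> 'o"
  cat_cod   :: "'a \<Rightarrow> 'o"
  cat_comp  :: "'a \<Rightarrow> 'a \<Rightarrow> 'a"
  cat_ident :: "'o \<Rightarrow> 'a"

definition category :: "('o, 'a) cat \<Rightarrow> bool" where
  "category C \<longleftrightarrow>
     (\<forall>f\<in>cat_arr C. cat_dom C f \<in> cat_obj C \<and> cat_cod C f \<in> cat_obj C) \<and>
     (\<forall>x\<in>cat_obj C. cat_ident C x \<in> cat_arr C \<and> cat_dom C (cat_ident C x) = x
                       \<and> cat_cod C (cat_ident C x) = x) \<and>
     (\<forall>f\<in>cat_arr C. \<forall>g\<in>cat_arr C. cat_dom C g = cat_cod C f \<longrightarrow>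
         cat_comp C g f \<in> cat_arr C \<and> cat_dom C (cat_comp C g f) = cat_dom C f
         \<and> cat_cod C (cat_comp C g f) = cat_cod C g) \<and>
     (\<forall>f\<in>cat_arr C. cat_comp C (cat_ident C (cat_cod C f)) f = f
                    \<and> cat_comp C f (cat_ident C (cat_dom C f)) = f) \<and>
     (\<forall>f\<in>cat_arr C. \<forall>g\<in>cat_arr C. \<forall>h\<in>cat_arr C.
         cat_dom C g = cat_cod C f \<longrightarrow> cat_dom C h = cat_cod C g \<longrightarrow>
         cat_comp C h (cat_comp C g f) = cat_comp C (cat_comp C h g) f)"

definition full_subcat :: "('o, 'a) cat \<Rightarrow> 'o set \<Rightarrow> ('o, 'a) cat" where
  "full_subcat C X =
     \<lparr> cat_obj = X,
       cat_arr = {f \<in> cat_arr C. cat_dom C f \<in> X \<and> cat_cod C f \<in> X},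
       cat_dom = cat_dom C, cat_cod = cat_cod C,
       cat_comp = cat_comp C, cat_ident = cat_ident C \<rparr>"

definition is_functor ::
  "('o1, 'a1) cat \<Rightarrow> ('o2, 'a2) cat \<Rightarrow> ('o1 \<Rightarrow> 'o2) \<Rightarrow> ('a1 \<Rightarrow> 'a2) \<Rightarrow> bool" where
  "is_functor A B Fo Fa \<longleftrightarrow> category A \<and> category B \<and>
     (\<forall>x\<in>cat_obj A. Fo x \<in> cat_obj B \<and> Fa (cat_ident A x) = cat_ident B (Fo x)) \<and>
     (\<forall>f\<in>cat_arr A. Fa f \<in> cat_arr B \<and> cat_dom B (Fa f) = Fo (cat_dom A f)
                    \<and> cat_cod B (Fa f) = Fo (cat_cod A f)) \<and>
     (\<forall>f\<in>cat_arr A. \<forall>g\<in>cat_arr A. cat_dom A g = cat_cod A f \<longrightarrow>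
         Fa (cat_comp A g f) = cat_comp B (Fa g) (Fa f))"

definition nat_trans ::
  "('o1, 'a1) cat \<Rightarrow> ('o2, 'a2) cat \<Rightarrow> ('o1 \<Rightarrow> 'o2) \<Rightarrow> ('a1 \<Rightarrow> 'a2)
     \<Rightarrow> ('o1 \<Rightarrow> 'o2) \<Rightarrow> ('a1 \<Rightarrow> 'a2) \<Rightarrow> ('o1 \<Rightarrow> 'a2) \<Rightarrow> bool" where
  "nat_trans A B Fo Fa Go Ga \<tau> \<longleftrightarrow> is_functor A B Fo Fa \<and> is_functor A B Go Ga \<and>
     (\<forall>x\<in>cat_obj A. \<tau> x \<in> cat_arr B \<and> cat_dom B (\<tau> x) = Fo x \<and> cat_cod B (\<tau> x) = Go x) \<and>
     (\<forall>f\<in>cat_arr A. cat_comp B (\<tau> (cat_cod A f)) (Fa f) = cat_comp B (Ga f) (\<tau> (cat_dom A f)))"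

definition iso_arr :: "('o, 'a) cat \<Rightarrow> 'a \<Rightarrow> bool" where
  "iso_arr C f \<longleftrightarrow> f \<in> cat_arr C \<and>
     (\<exists>g\<in>cat_arr C. cat_dom C g = cat_cod C f \<and> cat_cod C g = cat_dom C f \<and>
        cat_comp C g f = cat_ident C (cat_dom C f) \<and> cat_comp C f g = cat_ident C (cat_cod C f))"

definition adjunction ::
  "('o1, 'a1) cat \<Rightarrow> ('o2, 'a2) cat \<Rightarrow> ('o1 \<Rightarrow> 'o2) \<Rightarrow> ('a1 \<Rightarrow> 'a2)
     \<Rightarrow> ('o2 \<Rightarrow> 'o1) \<Rightarrow> ('a2 \<Rightarrow> 'a1) \<Rightarrow> ('o1 \<Rightarrow> 'a1) \<Rightarrow> ('o2 \<Rightarrow> 'a2) \<Rightarrow> bool" where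
  "adjunction A B Fo Fa Go Ga \<eta> \<epsilon> \<longleftrightarrow>
     is_functor A B Fo Fa \<and> is_functor B A Go Ga \<and>
     nat_trans A A id id (Go \<circ> Fo) (Ga \<circ> Fa) \<eta> \<and>
     nat_trans B B (Fo \<circ> Go) (Fa \<circ> Ga) id id \<epsilon> \<and>
     (\<forall>x\<in>cat_obj A. cat_comp B (\<epsilon> (Fo x)) (Fa (\<eta> x)) = cat_ident B (Fo x)) \<and>
     (\<forall>y\<in>cat_obj B. cat_comp A (Ga (\<epsilon> y)) (\<eta> (Go y)) = cat_ident A (Go y))"

definition equivalence ::
  "('o1, 'a1) cat \<Rightarrow> ('o2, 'a2) cat \<Rightarrow> ('o1 \<Rightarrow> 'o2) \<Rightarrow> ('a1 \<Rightarrow> 'a2) \<Rightarrow> bool" where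
  "equivalence A B Fo Fa \<longleftrightarrow> is_functor A B Fo Fa \<and>
     (\<exists>(Go :: 'o2 \<Rightarrow> 'o1) (Ga :: 'a2 \<Rightarrow> 'a1) \<eta> \<epsilon>. is_functor B A Go Ga \<and>
        nat_trans A A id id (Go \<circ> Fo) (Ga \<circ> Fa) \<eta> \<and> (\<forall>x\<in>cat_obj A. iso_arr A (\<eta> x)) \<and>
        nat_trans B B (Fo \<circ> Go) (Fa \<circ> Ga) id id \<epsilon> \<and> (\<forall>y\<in>cat_obj B. iso_arr B (\<epsilon> y)))"

end

theory Submission imports Defs begin

definition inv_arr :: "('o,'a) cat \<Rightarrow> 'a \<Rightarrow> 'a" where
 "inv_arr C f = (SOME g. g \<in> cat_arr C \<and> cat_dom C g = cat_cod C f \<and> cat_cod C g = cat_dom C f \<and>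
     cat_comp C g f = cat_ident C (cat_dom C f) \<and> cat_comp C f g = cat_ident C (cat_cod C f))"

locale cat =
  fixes C :: "('o,'a) cat"
  assumes cat: "category C"
begin
abbreviation "ar f \<equiv> f \<in> cat_arr C"
abbreviation "ob x \<equiv> x \<in> cat_obj C"
abbreviation "dm \<equiv> cat_dom C"
abbreviation "cd \<equiv> cat_cod C"
abbreviation "cp \<equiv> cat_comp C"
abbreviation "idt \<equiv> cat_ident C"
abbreviation "isoa \<equiv> iso_arr C"
abbreviation "iv \<equiv> inv_arr C"

lemma dom_obj[simp]: "ar f \<Longrightarrow> ob (dm f)" using cat unfolding category_def by blast
lemma cod_obj[simp]: "ar f \<Longrightarrow> ob (cd f)" using cat unfolding category_def by blast
lemma id_arr[simp]: "ob x \<Longrightarrow> ar (idt x)" using cat unfolding category_def by blast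
lemma dom_id[simp]: "ob x \<Longrightarrow> dm (idt x) = x" using cat unfolding category_def by blast
lemma cod_id[simp]: "ob x \<Longrightarrow> cd (idt x) = x" using cat unfolding category_def by blast
lemma comp_arr[simp]: "ar f \<Longrightarrow> ar g \<Longrightarrow> dm g = cd f \<Longrightarrow> ar (cp g f)"
  using cat unfolding category_def by blast
lemma dom_comp[simp]: "ar f \<Longrightarrow> ar g \<Longrightarrow> dm g = cd f \<Longrightarrow> dm (cp g f) = dm f"
  using cat unfolding category_def by blast
lemma cod_comp[simp]: "ar f \<Longrightarrow> ar g \<Longrightarrow> dm g = cd f \<Longrightarrow> cd (cp g f) = cd g"
  using cat unfolding category_def by blast
lemma id_l[simp]: "ar f \<Longrightarrow> cd f = x \<Longrightarrow> cp (idt x) f = f"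
  using cat unfolding category_def by blast
lemma id_r[simp]: "ar f \<Longrightarrow> dm f = x \<Longrightarrow> cp f (idt x) = f"
  using cat unfolding category_def by blast
lemma assoc[simp]: "ar f \<Longrightarrow> ar g \<Longrightarrow> ar h \<Longrightarrow> dm g = cd f \<Longrightarrow> dm h = cd g \<Longrightarrow>
   cp (cp h g) f = cp h (cp g f)"
  using cat unfolding category_def by metis

lemma inv_props: assumes "isoa f"
  shows "ar (iv f) \<and> dm (iv f) = cd f \<and> cd (iv f) = dm f \<and> cp (iv f) f = idt (dm f) \<and> cp f (iv f) = idt (cd f)"
proof -
  have ex: "\<exists>g. g \<in> cat_arr C \<and> cat_dom C g = cat_cod C f \<and> cat_cod C g = cat_dom C f \<and>
     cat_comp C g f = cat_ident C (cat_dom C f) \<and> cat_comp C f g = cat_ident C (cat_cod C f)"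
    using assms unfolding iso_arr_def by blast
  show ?thesis unfolding inv_arr_def by (rule someI_ex[OF ex])
qed

lemma iso_ar[simp]: "isoa f \<Longrightarrow> ar f" unfolding iso_arr_def by blast
lemma inv_ar[simp]: "isoa f \<Longrightarrow> ar (iv f)" using inv_props by blast
lemma dom_inv[simp]: "isoa f \<Longrightarrow> dm (iv f) = cd f" using inv_props by blast
lemma cod_inv[simp]: "isoa f \<Longrightarrow> cd (iv f) = dm f" using inv_props by blast
lemma inv_l[simp]: "isoa f \<Longrightarrow> dm f = x \<Longrightarrow> cp (iv f) f = idt x" using inv_props by blast
lemma inv_r[simp]: "isoa f \<Longrightarrow> cd f = x \<Longrightarrow> cp f (iv f) = idt x" using inv_props by blast

lemma cancel_l[simp]: "isoa f \<Longrightarrow> ar g \<Longrightarrow> cd g = dm f \<Longrightarrow> cp (iv f) (cp f g) = g"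
proof -
  assume a: "isoa f" "ar g" "cd g = dm f"
  have "cp (iv f) (cp f g) = cp (cp (iv f) f) g" using a by (intro assoc[symmetric]) auto
  also have "\<dots> = g" using a by simp
  finally show ?thesis .
qed

lemma cancel_r[simp]: "isoa f \<Longrightarrow> ar g \<Longrightarrow> cd g = cd f \<Longrightarrow> cp f (cp (iv f) g) = g"
proof -
  assume a: "isoa f" "ar g" "cd g = cd f"
  have "cp f (cp (iv f) g) = cp (cp f (iv f)) g" using a by (intro assoc[symmetric]) auto
  also have "\<dots> = g" using a by simp
  finally show ?thesis .
qed

lemma inv_unique_l: "isoa h \<Longrightarrow> ar k \<Longrightarrow> cd k = dm h \<Longrightarrow> cp h k = idt (cd h) \<Longrightarrow> k = iv h"
proof -
  assume a: "isoa h" "ar k" "cd k = dm h" "cp h k = idt (cd h)"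
  have "k = cp (iv h) (cp h k)" using a(1-3) by simp
  also have "\<dots> = iv h" using a by simp
  finally show ?thesis .
qed

lemma inv_unique_r: "isoa h \<Longrightarrow> ar k \<Longrightarrow> dm k = cd h \<Longrightarrow> cp k h = idt (dm h) \<Longrightarrow> k = iv h"
proof -
  assume a: "isoa h" "ar k" "dm k = cd h" "cp k h = idt (dm h)"
  have "k = cp k (cp h (iv h))" using a(1-3) by simp
  also have "\<dots> = cp (cp k h) (iv h)" using a(1-3) by simp
  also have "\<dots> = iv h" using a by simp
  finally show ?thesis .
qed

lemma iso_inv_iso[simp]: "isoa f \<Longrightarrow> isoa (iv f)"
  unfolding iso_arr_def[of C "iv f"] by (rule conjI, simp, rule bexI[of _ f]) auto

lemma inv_inv[simp]: "isoa f \<Longrightarrow> iv (iv f) = f"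
  by (rule inv_unique_r[symmetric]) auto

lemma iso_comp[simp]: "isoa f \<Longrightarrow> isoa g \<Longrightarrow> dm g = cd f \<Longrightarrow> isoa (cp g f)"
  unfolding iso_arr_def[of C "cp g f"]
  by (rule conjI, simp, rule bexI[of _ "cp (iv f) (iv g)"]) auto

lemma inv_comp: "isoa f \<Longrightarrow> isoa g \<Longrightarrow> dm g = cd f \<Longrightarrow> iv (cp g f) = cp (iv f) (iv g)"
  by (rule inv_unique_r[symmetric]) auto

lemma iso_swap:
  assumes "isoa a" "isoa b" "ar g" "ar h" "dm g = cd a" "cd h = dm b" "cp g a = cp b h"
  shows "cp (iv b) g = cp h (iv a)"
proof -
  have "dm b = cd h" "cd g = cd b" "dm h = dm a"
    using assms(1-6) assms(7)[THEN arg_cong[where f=cd]] assms(7)[THEN arg_cong[where f=dm]] by auto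
  have "g = cp (cp g a) (iv a)" using assms(1-6) by simp
  also have "\<dots> = cp (cp b h) (iv a)" using assms(7) by simp
  finally have g: "g = cp (cp b h) (iv a)" .
  have "cp (iv b) g = cp (iv b) (cp (cp b h) (iv a))" by (subst g) (rule refl)
  also have "\<dots> = cp h (iv a)" using assms(1-6) \<open>dm h = dm a\<close> by simp
  finally show ?thesis .
qed
end

lemma functor_iso:
  assumes F: "is_functor A B Fo Fa" and i: "iso_arr A f"
  shows "iso_arr B (Fa f) \<and> Fa (inv_arr A f) = inv_arr B (Fa f)"
proof -
  interpret A: cat A using F unfolding is_functor_def by (simp add: cat.intro)
  interpret B: cat B using F unfolding is_functor_def by (simp add: cat.intro)
  have fa: "\<And>f. A.ar f \<Longrightarrow> B.ar (Fa f) \<and> B.dm (Fa f) = Fo (A.dm f) \<and> B.cd (Fa f) = Fo (A.cd f)"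
    using F unfolding is_functor_def by blast
  have fc: "\<And>f g. A.ar f \<Longrightarrow> A.ar g \<Longrightarrow> A.dm g = A.cd f \<Longrightarrow> Fa (A.cp g f) = B.cp (Fa g) (Fa f)"
    using F unfolding is_functor_def by blast
  have fi: "\<And>x. A.ob x \<Longrightarrow> Fa (A.idt x) = B.idt (Fo x)"
    using F unfolding is_functor_def by blast
  have ar: "A.ar f" "A.ar (A.iv f)" using i by auto
  have e1: "B.cp (Fa (A.iv f)) (Fa f) = B.idt (B.dm (Fa f))"
    using fc[of f "A.iv f"] ar i fa fi by simp
  have e2: "B.cp (Fa f) (Fa (A.iv f)) = B.idt (B.cd (Fa f))"
    using fc[of "A.iv f" f] ar i fa fi by simp
  have iso: "B.isoa (Fa f)" unfolding iso_arr_def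
    using e1 e2 fa[OF ar(1)] fa[OF ar(2)] i by (intro conjI bexI[of _ "Fa (A.iv f)"]) auto
  moreover have "Fa (A.iv f) = B.iv (Fa f)"
    by (rule B.inv_unique_r[OF iso]) (use fa[OF ar(1)] fa[OF ar(2)] i e1 in auto)
  ultimately show ?thesis by blast
qed

lemma nat_trans_inv:
  assumes N: "nat_trans A B Fo Fa Go Ga \<tau>" and I: "\<forall>x\<in>cat_obj A. iso_arr B (\<tau> x)"
  shows "nat_trans A B Go Ga Fo Fa (\<lambda>x. inv_arr B (\<tau> x))"
proof -
  have F: "is_functor A B Fo Fa" and G: "is_functor A B Go Ga" using N unfolding nat_trans_def by auto
  interpret A: cat A using F unfolding is_functor_def by (simp add: cat.intro)
  interpret B: cat B using F unfolding is_functor_def by (simp add: cat.intro)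
  have fa: "\<And>f. A.ar f \<Longrightarrow> B.ar (Fa f) \<and> B.dm (Fa f) = Fo (A.dm f) \<and> B.cd (Fa f) = Fo (A.cd f)"
    using F unfolding is_functor_def by blast
  have ga: "\<And>f. A.ar f \<Longrightarrow> B.ar (Ga f) \<and> B.dm (Ga f) = Go (A.dm f) \<and> B.cd (Ga f) = Go (A.cd f)"
    using G unfolding is_functor_def by blast
  have t: "\<And>x. A.ob x \<Longrightarrow> B.ar (\<tau> x) \<and> B.dm (\<tau> x) = Fo x \<and> B.cd (\<tau> x) = Go x"
    using N unfolding nat_trans_def by blast
  have nt: "\<And>f. A.ar f \<Longrightarrow> B.cp (\<tau> (A.cd f)) (Fa f) = B.cp (Ga f) (\<tau> (A.dm f))"
    using N unfolding nat_trans_def by blast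
  show ?thesis unfolding nat_trans_def
  proof (intro conjI G F ballI)
    fix x assume "A.ob x" thus "B.ar (B.iv (\<tau> x))" "B.dm (B.iv (\<tau> x)) = Go x" "B.cd (B.iv (\<tau> x)) = Fo x"
      using I t by auto
  next
    fix f assume f: "A.ar f"
    show "B.cp (B.iv (\<tau> (A.cd f))) (Ga f) = B.cp (Fa f) (B.iv (\<tau> (A.dm f)))"
      by (rule B.iso_swap) (use f I t fa ga nt[OF f] in auto)
  qed
qed

lemma fs_simps[simp]:
  "cat_obj (full_subcat C X) = X"
  "cat_arr (full_subcat C X) = {f \<in> cat_arr C. cat_dom C f \<in> X \<and> cat_cod C f \<in> X}"
  "cat_dom (full_subcat C X) = cat_dom C" "cat_cod (full_subcat C X) = cat_cod C"
  "cat_comp (full_subcat C X) = cat_comp C" "cat_ident (full_subcat C X) = cat_ident C"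
  by (simp_all add: full_subcat_def)

lemma fs_cat: assumes "category C" "X \<subseteq> cat_obj C" shows "category (full_subcat C X)"
proof -
  interpret cat C by (rule cat.intro) fact
  show ?thesis unfolding category_def using assms(2) by auto
qed

lemma iso_fs: assumes "category C" "X \<subseteq> cat_obj C"
  shows "iso_arr (full_subcat C X) f \<longleftrightarrow> iso_arr C f \<and> cat_dom C f \<in> X \<and> cat_cod C f \<in> X"
  unfolding iso_arr_def by auto

lemma functor_to_fs: "is_functor A (full_subcat C X) Fo Fa \<Longrightarrow> category C \<Longrightarrow> X \<subseteq> cat_obj C \<Longrightarrow> is_functor A C Fo Fa"
  unfolding is_functor_def by auto

lemma functor_restrict: "is_functor C B Fo Fa \<Longrightarrow> X \<subseteq> cat_obj C \<Longrightarrow> is_functor (full_subcat C X) B Fo Fa"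
  unfolding is_functor_def using fs_cat[of C X] by auto

lemma functor_comp: "is_functor A B F Fa \<Longrightarrow> is_functor B C G Ga \<Longrightarrow> is_functor A C (G \<circ> F) (Ga \<circ> Fa)"
  unfolding is_functor_def by auto

lemma functor_id: "category A \<Longrightarrow> is_functor A A id id"
  unfolding is_functor_def category_def by auto


locale cor_ctx = cat C
  for C :: "('o,'a) cat" +
  fixes XB XD :: "'o set"
    and So To :: "'o \<Rightarrow> 'o" and Sa Ta :: "'a \<Rightarrow> 'a"
    and \<alpha> \<beta> \<gamma> \<epsilon> :: "'o \<Rightarrow> 'a"
  assumes XB: "XB \<subseteq> cat_obj C" and XD: "XD \<subseteq> cat_obj C"
    and adjS: "adjunction C (full_subcat C XB) So Sa id id \<alpha> \<beta>"
    and counitS: "\<forall>b\<in>XB. iso_arr (full_subcat C XB) (\<beta> b)"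
    and adjT: "adjunction (full_subcat C XD) C id id To Ta \<gamma> \<epsilon>"
    and unitT: "\<forall>d\<in>XD. iso_arr (full_subcat C XD) (\<gamma> d)"
    and ISeps: "\<forall>c\<in>cat_obj C. iso_arr C (Sa (\<epsilon> c))"
    and JTalpha: "\<forall>c\<in>cat_obj C. iso_arr C (Ta (\<alpha> c))"
begin

abbreviation "fB \<equiv> full_subcat C XB"
abbreviation "fD \<equiv> full_subcat C XD"

lemma XB_ob[simp]: "b \<in> XB \<Longrightarrow> ob b" using XB by auto
lemma XD_ob[simp]: "d \<in> XD \<Longrightarrow> ob d" using XD by auto

lemma FS: "is_functor C fB So Sa" using adjS unfolding adjunction_def by blast
lemma FT: "is_functor C fD To Ta" using adjT unfolding adjunction_def by blast
lemma FSC: "is_functor C C So Sa" using functor_to_fs[OF FS cat XB] .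
lemma FTC: "is_functor C C To Ta" using functor_to_fs[OF FT cat XD] .

lemma So_in[simp]: "ob c \<Longrightarrow> So c \<in> XB" using FS unfolding is_functor_def by auto
lemma To_in[simp]: "ob c \<Longrightarrow> To c \<in> XD" using FT unfolding is_functor_def by auto
lemma Sa_ar[simp]: "ar f \<Longrightarrow> ar (Sa f)" using FSC unfolding is_functor_def by auto
lemma Sa_dm[simp]: "ar f \<Longrightarrow> dm (Sa f) = So (dm f)" using FSC unfolding is_functor_def by auto
lemma Sa_cd[simp]: "ar f \<Longrightarrow> cd (Sa f) = So (cd f)" using FSC unfolding is_functor_def by auto
lemma Sa_comp: "ar f \<Longrightarrow> ar g \<Longrightarrow> dm g = cd f \<Longrightarrow> Sa (cp g f) = cp (Sa g) (Sa f)"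
  using FSC unfolding is_functor_def by auto
lemma Ta_ar[simp]: "ar f \<Longrightarrow> ar (Ta f)" using FTC unfolding is_functor_def by auto
lemma Ta_dm[simp]: "ar f \<Longrightarrow> dm (Ta f) = To (dm f)" using FTC unfolding is_functor_def by auto
lemma Ta_cd[simp]: "ar f \<Longrightarrow> cd (Ta f) = To (cd f)" using FTC unfolding is_functor_def by auto
lemma Ta_comp: "ar f \<Longrightarrow> ar g \<Longrightarrow> dm g = cd f \<Longrightarrow> Ta (cp g f) = cp (Ta g) (Ta f)"
  using FTC unfolding is_functor_def by auto
lemma Sa_iso[simp]: "isoa f \<Longrightarrow> isoa (Sa f)" using functor_iso[OF FSC] by blast
lemma Sa_inv: "isoa f \<Longrightarrow> Sa (iv f) = iv (Sa f)" using functor_iso[OF FSC] by blast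
lemma Ta_iso[simp]: "isoa f \<Longrightarrow> isoa (Ta f)" using functor_iso[OF FTC] by blast
lemma Ta_inv: "isoa f \<Longrightarrow> Ta (iv f) = iv (Ta f)" using functor_iso[OF FTC] by blast

lemma al[simp]: "ob c \<Longrightarrow> ar (\<alpha> c)" "ob c \<Longrightarrow> dm (\<alpha> c) = c" "ob c \<Longrightarrow> cd (\<alpha> c) = So c"
  using adjS unfolding adjunction_def nat_trans_def by auto
lemma al_nat: "ar f \<Longrightarrow> cp (\<alpha> (cd f)) f = cp (Sa f) (\<alpha> (dm f))"
  using adjS unfolding adjunction_def nat_trans_def by auto
lemma be[simp]: "b \<in> XB \<Longrightarrow> ar (\<beta> b)" "b \<in> XB \<Longrightarrow> dm (\<beta> b) = So b" "b \<in> XB \<Longrightarrow> cd (\<beta> b) = b"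
  using adjS unfolding adjunction_def nat_trans_def by auto
lemma tri1: "ob c \<Longrightarrow> cp (\<beta> (So c)) (Sa (\<alpha> c)) = idt (So c)"
  using adjS unfolding adjunction_def by auto
lemma tri2: "b \<in> XB \<Longrightarrow> cp (\<beta> b) (\<alpha> b) = idt b"
  using adjS unfolding adjunction_def by auto
lemma be_iso[simp]: "b \<in> XB \<Longrightarrow> isoa (\<beta> b)" using counitS iso_fs[OF cat XB] by auto

lemma ga[simp]: "d \<in> XD \<Longrightarrow> ar (\<gamma> d)" "d \<in> XD \<Longrightarrow> dm (\<gamma> d) = d" "d \<in> XD \<Longrightarrow> cd (\<gamma> d) = To d"
  using adjT unfolding adjunction_def nat_trans_def by auto
lemma ep[simp]: "ob c \<Longrightarrow> ar (\<epsilon> c)" "ob c \<Longrightarrow> dm (\<epsilon> c) = To c" "ob c \<Longrightarrow> cd (\<epsilon> c) = c"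
  using adjT unfolding adjunction_def nat_trans_def by auto
lemma ep_nat: "ar f \<Longrightarrow> cp (\<epsilon> (cd f)) (Ta f) = cp f (\<epsilon> (dm f))"
  using adjT unfolding adjunction_def nat_trans_def by auto
lemma tri3: "d \<in> XD \<Longrightarrow> cp (\<epsilon> d) (\<gamma> d) = idt d"
  using adjT unfolding adjunction_def by auto
lemma tri4: "ob c \<Longrightarrow> cp (Ta (\<epsilon> c)) (\<gamma> (To c)) = idt (To c)"
  using adjT unfolding adjunction_def by auto
lemma ga_iso[simp]: "d \<in> XD \<Longrightarrow> isoa (\<gamma> d)" using unitT iso_fs[OF cat XD] by auto

lemma al_B: "b \<in> XB \<Longrightarrow> \<alpha> b = iv (\<beta> b)"
  by (rule inv_unique_l) (auto simp: tri2)
lemma al_iso[simp]: "b \<in> XB \<Longrightarrow> isoa (\<alpha> b)" using al_B by simp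
lemma Sa_al: "ob c \<Longrightarrow> Sa (\<alpha> c) = iv (\<beta> (So c))"
  by (rule inv_unique_l) (auto simp: tri1)
lemma Sa_al_iso[simp]: "ob c \<Longrightarrow> isoa (Sa (\<alpha> c))" using Sa_al by simp
lemma ep_D: "d \<in> XD \<Longrightarrow> \<epsilon> d = iv (\<gamma> d)"
  by (rule inv_unique_r) (auto simp: tri3)
lemma ep_iso[simp]: "d \<in> XD \<Longrightarrow> isoa (\<epsilon> d)" using ep_D by simp
lemma Ta_ep: "ob c \<Longrightarrow> Ta (\<epsilon> c) = iv (\<gamma> (To c))"
  by (rule inv_unique_r) (auto simp: tri4)
lemma Ta_ep_iso[simp]: "ob c \<Longrightarrow> isoa (Ta (\<epsilon> c))" using Ta_ep by simp
lemma Sep_iso[simp]: "ob c \<Longrightarrow> isoa (Sa (\<epsilon> c))" using ISeps by auto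
lemma Tal_iso[simp]: "ob c \<Longrightarrow> isoa (Ta (\<alpha> c))" using JTalpha by auto

definition "eta b = cp (iv (Sa (\<epsilon> b))) (\<alpha> b)"
definition "epsp d = cp (\<epsilon> d) (iv (Ta (\<alpha> d)))"

lemma eta[simp]: "b \<in> XB \<Longrightarrow> ar (eta b)" "b \<in> XB \<Longrightarrow> dm (eta b) = b"
  "b \<in> XB \<Longrightarrow> cd (eta b) = So (To b)" "b \<in> XB \<Longrightarrow> isoa (eta b)"
  unfolding eta_def by auto
lemma epsp[simp]: "d \<in> XD \<Longrightarrow> ar (epsp d)" "d \<in> XD \<Longrightarrow> dm (epsp d) = To (So d)"
  "d \<in> XD \<Longrightarrow> cd (epsp d) = d" "d \<in> XD \<Longrightarrow> isoa (epsp d)"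
  unfolding epsp_def by auto

lemma triA: assumes b: "b \<in> XB" shows "cp (epsp (To b)) (Ta (eta b)) = idt (To b)"
proof -
  let ?t = "To b"
  have bo: "ob b" using b by simp
  have n1: "cp (\<alpha> b) (\<epsilon> b) = cp (Sa (\<epsilon> b)) (\<alpha> ?t)"
    using al_nat[of "\<epsilon> b"] bo by simp
  have n2: "cp (Ta (\<alpha> b)) (Ta (\<epsilon> b)) = cp (Ta (Sa (\<epsilon> b))) (Ta (\<alpha> ?t))"
    using arg_cong[OF n1, of Ta] bo by (simp add: Ta_comp)
  have n3: "cp (iv (Ta (\<alpha> ?t))) (iv (Ta (Sa (\<epsilon> b)))) = cp (iv (Ta (\<epsilon> b))) (iv (Ta (\<alpha> b)))"
  proof -
    have "cp (iv (Ta (\<alpha> ?t))) (iv (Ta (Sa (\<epsilon> b)))) = iv (cp (Ta (Sa (\<epsilon> b))) (Ta (\<alpha> ?t)))"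
      using bo by (simp add: inv_comp)
    also have "\<dots> = iv (cp (Ta (\<alpha> b)) (Ta (\<epsilon> b)))" using n2 by simp
    also have "\<dots> = cp (iv (Ta (\<epsilon> b))) (iv (Ta (\<alpha> b)))" using bo by (simp add: inv_comp)
    finally show ?thesis .
  qed
  have n4: "cp (iv (Ta (\<alpha> ?t))) (cp (iv (Ta (Sa (\<epsilon> b)))) (Ta (\<alpha> b))) = iv (Ta (\<epsilon> b))"
  proof -
    have "cp (iv (Ta (\<alpha> ?t))) (cp (iv (Ta (Sa (\<epsilon> b)))) (Ta (\<alpha> b)))
        = cp (cp (iv (Ta (\<alpha> ?t))) (iv (Ta (Sa (\<epsilon> b))))) (Ta (\<alpha> b))"
      using bo by (intro assoc[symmetric]) auto
    also have "\<dots> = cp (cp (iv (Ta (\<epsilon> b))) (iv (Ta (\<alpha> b)))) (Ta (\<alpha> b))" using n3 by simp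
    also have "\<dots> = iv (Ta (\<epsilon> b))" using bo by simp
    finally show ?thesis .
  qed
  have "cp (epsp ?t) (Ta (eta b)) = cp (\<epsilon> ?t) (cp (iv (Ta (\<alpha> ?t))) (cp (iv (Ta (Sa (\<epsilon> b)))) (Ta (\<alpha> b))))"
    unfolding epsp_def eta_def using bo by (simp add: Ta_comp Ta_inv)
  also have "\<dots> = cp (\<epsilon> ?t) (\<gamma> ?t)" using n4 bo by (simp add: Ta_ep)
  also have "\<dots> = idt ?t" using bo by (simp add: tri3)
  finally show ?thesis .
qed

lemma triB: assumes d: "d \<in> XD" shows "cp (Sa (epsp d)) (eta (So d)) = idt (So d)"
proof -
  let ?s = "So d"
  have bo: "ob d" using d by simp
  have n1: "cp (\<epsilon> ?s) (Ta (\<alpha> d)) = cp (\<alpha> d) (\<epsilon> d)"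
    using ep_nat[of "\<alpha> d"] bo by simp
  have n2: "cp (Sa (\<epsilon> ?s)) (Sa (Ta (\<alpha> d))) = cp (Sa (\<alpha> d)) (Sa (\<epsilon> d))"
    using arg_cong[OF n1, of Sa] bo by (simp add: Sa_comp)
  have n3: "cp (iv (Sa (Ta (\<alpha> d)))) (iv (Sa (\<epsilon> ?s))) = cp (iv (Sa (\<epsilon> d))) (iv (Sa (\<alpha> d)))"
  proof -
    have "cp (iv (Sa (Ta (\<alpha> d)))) (iv (Sa (\<epsilon> ?s))) = iv (cp (Sa (\<epsilon> ?s)) (Sa (Ta (\<alpha> d))))"
      using bo by (simp add: inv_comp)
    also have "\<dots> = iv (cp (Sa (\<alpha> d)) (Sa (\<epsilon> d)))" using n2 by simp
    also have "\<dots> = cp (iv (Sa (\<epsilon> d))) (iv (Sa (\<alpha> d)))" using bo by (simp add: inv_comp)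
    finally show ?thesis .
  qed
  have n4: "cp (Sa (\<epsilon> d)) (cp (iv (Sa (Ta (\<alpha> d)))) (cp (iv (Sa (\<epsilon> ?s))) (\<alpha> ?s))) = cp (iv (Sa (\<alpha> d))) (\<alpha> ?s)"
  proof -
    have "cp (iv (Sa (Ta (\<alpha> d)))) (cp (iv (Sa (\<epsilon> ?s))) (\<alpha> ?s))
        = cp (cp (iv (Sa (Ta (\<alpha> d)))) (iv (Sa (\<epsilon> ?s)))) (\<alpha> ?s)"
      using bo by (intro assoc[symmetric]) auto
    also have "\<dots> = cp (cp (iv (Sa (\<epsilon> d))) (iv (Sa (\<alpha> d)))) (\<alpha> ?s)" using n3 by simp
    also have "\<dots> = cp (iv (Sa (\<epsilon> d))) (cp (iv (Sa (\<alpha> d))) (\<alpha> ?s))" using bo by simp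
    finally have "cp (Sa (\<epsilon> d)) (cp (iv (Sa (Ta (\<alpha> d)))) (cp (iv (Sa (\<epsilon> ?s))) (\<alpha> ?s)))
       = cp (Sa (\<epsilon> d)) (cp (iv (Sa (\<epsilon> d))) (cp (iv (Sa (\<alpha> d))) (\<alpha> ?s)))" by simp
    also have "\<dots> = cp (iv (Sa (\<alpha> d))) (\<alpha> ?s)" using bo by simp
    finally show ?thesis .
  qed
  have "cp (Sa (epsp d)) (eta ?s) = cp (Sa (\<epsilon> d)) (cp (iv (Sa (Ta (\<alpha> d)))) (cp (iv (Sa (\<epsilon> ?s))) (\<alpha> ?s)))"
    unfolding epsp_def eta_def using bo by (simp add: Sa_comp Sa_inv)
  also have "\<dots> = cp (\<beta> ?s) (\<alpha> ?s)" using n4 bo by (simp add: Sa_al)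
  also have "\<dots> = idt ?s" using bo by (simp add: tri2)
  finally show ?thesis .
qed

lemma eta_nat: assumes f: "ar f" "dm f \<in> XB" "cd f \<in> XB"
  shows "cp (eta (cd f)) f = cp (Sa (Ta f)) (eta (dm f))"
proof -
  have e: "cp (Sa f) (Sa (\<epsilon> (dm f))) = cp (Sa (\<epsilon> (cd f))) (Sa (Ta f))"
    using arg_cong[OF ep_nat[OF f(1)], of Sa] f by (simp add: Sa_comp)
  have sw: "cp (iv (Sa (\<epsilon> (cd f)))) (Sa f) = cp (Sa (Ta f)) (iv (Sa (\<epsilon> (dm f))))"
    by (rule iso_swap) (use e f in auto)
  have "cp (eta (cd f)) f = cp (iv (Sa (\<epsilon> (cd f)))) (cp (\<alpha> (cd f)) f)"
    unfolding eta_def using f by simp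
  also have "\<dots> = cp (iv (Sa (\<epsilon> (cd f)))) (cp (Sa f) (\<alpha> (dm f)))" using al_nat[OF f(1)] by simp
  also have "\<dots> = cp (cp (iv (Sa (\<epsilon> (cd f)))) (Sa f)) (\<alpha> (dm f))"
    using f by (intro assoc[symmetric]) auto
  also have "\<dots> = cp (cp (Sa (Ta f)) (iv (Sa (\<epsilon> (dm f))))) (\<alpha> (dm f))" using sw by simp
  also have "\<dots> = cp (Sa (Ta f)) (eta (dm f))" unfolding eta_def using f by simp
  finally show ?thesis .
qed

lemma epsp_nat: assumes f: "ar f" "dm f \<in> XD" "cd f \<in> XD"
  shows "cp (epsp (cd f)) (Ta (Sa f)) = cp f (epsp (dm f))"
proof -
  have e: "cp (Ta (Sa f)) (Ta (\<alpha> (dm f))) = cp (Ta (\<alpha> (cd f))) (Ta f)"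
    using arg_cong[OF al_nat[OF f(1)], of Ta] f by (simp add: Ta_comp)
  have sw: "cp (iv (Ta (\<alpha> (cd f)))) (Ta (Sa f)) = cp (Ta f) (iv (Ta (\<alpha> (dm f))))"
    by (rule iso_swap) (use e f in auto)
  have "cp (epsp (cd f)) (Ta (Sa f)) = cp (\<epsilon> (cd f)) (cp (iv (Ta (\<alpha> (cd f)))) (Ta (Sa f)))"
    unfolding epsp_def using f by simp
  also have "\<dots> = cp (\<epsilon> (cd f)) (cp (Ta f) (iv (Ta (\<alpha> (dm f)))))" using sw by simp
  also have "\<dots> = cp (cp (\<epsilon> (cd f)) (Ta f)) (iv (Ta (\<alpha> (dm f))))"
    using f by (intro assoc[symmetric]) auto
  also have "\<dots> = cp (cp f (\<epsilon> (dm f))) (iv (Ta (\<alpha> (dm f))))" using ep_nat[OF f(1)] by simp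
  also have "\<dots> = cp f (epsp (dm f))" unfolding epsp_def using f by simp
  finally show ?thesis .
qed


lemma catB: "category fB" using fs_cat[OF cat XB] .
lemma catD: "category fD" using fs_cat[OF cat XD] .
lemma FTB: "is_functor fB fD To Ta" using functor_restrict[OF FT XB] .
lemma FSD: "is_functor fD fB So Sa" using functor_restrict[OF FS XD] .

lemma NT_eta: "nat_trans fB fB id id (So \<circ> To) (Sa \<circ> Ta) eta"
  unfolding nat_trans_def
  using functor_id[OF catB] functor_comp[OF FTB FSD] eta_nat by auto

lemma NT_epsp: "nat_trans fD fD (To \<circ> So) (Ta \<circ> Sa) id id epsp"
  unfolding nat_trans_def
  using functor_id[OF catD] functor_comp[OF FSD FTB] epsp_nat by auto

lemma eta_isoB: "\<forall>b\<in>XB. iso_arr fB (eta b)" using iso_fs[OF cat XB] by auto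
lemma epsp_isoD: "\<forall>d\<in>XD. iso_arr fD (epsp d)" using iso_fs[OF cat XD] by auto

lemma main: "(\<exists>\<eta> \<epsilon>'. adjunction fB fD To Ta So Sa \<eta> \<epsilon>')
         \<and> equivalence fB fD To Ta \<and> equivalence fD fB So Sa"
proof (intro conjI)
  show "\<exists>\<eta> \<epsilon>'. adjunction fB fD To Ta So Sa \<eta> \<epsilon>'"
    unfolding adjunction_def
    using FTB FSD NT_eta NT_epsp triA triB by auto
  show "equivalence fB fD To Ta"
    unfolding equivalence_def
    using FTB FSD NT_eta NT_epsp eta_isoB epsp_isoD
    by (intro conjI exI[of _ So] exI[of _ Sa] exI[of _ eta] exI[of _ epsp]) auto
  have catD': "cat fD" using catD by (rule cat.intro)
  have catB': "cat fB" using catB by (rule cat.intro)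
  have i1: "\<forall>d\<in>XD. iso_arr fD (inv_arr fD (epsp d))"
    using epsp_isoD cat.iso_inv_iso[OF catD'] by auto
  have i2: "\<forall>b\<in>XB. iso_arr fB (inv_arr fB (eta b))"
    using eta_isoB cat.iso_inv_iso[OF catB'] by auto
  show "equivalence fD fB So Sa"
    unfolding equivalence_def
    using FTB FSD nat_trans_inv[OF NT_eta] nat_trans_inv[OF NT_epsp] eta_isoB epsp_isoD i1 i2
    by (intro conjI exI[of _ To] exI[of _ Ta]
         exI[of _ "\<lambda>d. inv_arr fD (epsp d)"] exI[of _ "\<lambda>b. inv_arr fB (eta b)"]) auto
qed

end

theorem corollaryA6:
  fixes C :: "('o, 'a) cat"
    and XB XD :: "'o set"
    and So To :: "'o \<Rightarrow> 'o" and Sa Ta :: "'a \<Rightarrow> 'a"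
    and \<alpha> \<beta> \<gamma> \<epsilon> :: "'o \<Rightarrow> 'a"
  assumes C: "category C"
    and XB: "XB \<subseteq> cat_obj C" and XD: "XD \<subseteq> cat_obj C"
    and adjS: "adjunction C (full_subcat C XB) So Sa id id \<alpha> \<beta>"
    and counitS: "\<forall>b\<in>XB. iso_arr (full_subcat C XB) (\<beta> b)"
    and adjT: "adjunction (full_subcat C XD) C id id To Ta \<gamma> \<epsilon>"
    and unitT: "\<forall>d\<in>XD. iso_arr (full_subcat C XD) (\<gamma> d)"
    and ISeps: "\<forall>c\<in>cat_obj C. iso_arr C (Sa (\<epsilon> c))"
    and JTalpha: "\<forall>c\<in>cat_obj C. iso_arr C (Ta (\<alpha> c))"
  shows "(\<exists>\<eta> \<epsilon>'. adjunction (full_subcat C XB) (full_subcat C XD) To Ta So Sa \<eta> \<epsilon>')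
         \<and> equivalence (full_subcat C XB) (full_subcat C XD) To Ta
         \<and> equivalence (full_subcat C XD) (full_subcat C XB) So Sa"
proof -
  interpret s: cor_ctx C XB XD So To Sa Ta \<alpha> \<beta> \<gamma> \<epsilon>
    by (intro cor_ctx.intro cat.intro cor_ctx_axioms.intro) (fact assms)+
  show ?thesis by (rule s.main)
qed

end
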